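(* Let $K\subset\mathbb{R}$ be a real biquadratic bicyclic number field with quadratic subfields $k_1,k_2,k_3$, whose fundamental units $\varepsilon_i>1$ all satisfy $N_{k_i/\mathbb{Q}}(\varepsilon_i)=-1$. Let $\eta=\varepsilon_1\varepsilon_2\varepsilon_3$. Then $\mathbb{Q}(\eta)=K$, the extension $\mathbb{Q}(\sqrt{\eta})/\mathbb{Q}$ is Galois and its Galois group has exponent $2$. Moreover, there exists $r\in\mathbb{Q}\setminus\{0\}$ such that $K(\sqrt{\eta})=K(\sqrt r)$, and, setting $\rho=\sqrt{r\eta}$, one has $\rho\in K$ and $\eta=\rho^2/r$. *)

theory Defs
  imports "HOL-Analysis.Analysis" "HOL-Computational_Algebra.Polynomial"
begin

definition subfield :: "complex set \<Rightarrow> bool" where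
  "subfield F \<longleftrightarrow> 0 \<in> F \<and> 1 \<in> F \<and>
     (\<forall>x\<in>F. \<forall>y\<in>F. x + y \<in> F \<and> x * y \<in> F) \<and>
     (\<forall>x\<in>F. - x \<in> F) \<and> (\<forall>x\<in>F. x \<noteq> 0 \<longrightarrow> inverse x \<in> F)"

definition gen_field :: "complex set \<Rightarrow> complex set" where
  "gen_field S = \<Inter>{F. subfield F \<and> S \<subseteq> F}"

text \<open>Field embeddings F -> C (ring homomorphisms; they automatically fix Q).\<close>
definition field_emb :: "complex set \<Rightarrow> (complex \<Rightarrow> complex) \<Rightarrow> bool" where
  "field_emb F \<sigma> \<longleftrightarrow> \<sigma> 1 = 1 \<and>
     (\<forall>x\<in>F. \<forall>y\<in>F. \<sigma> (x + y) = \<sigma> x + \<sigma> y \<and> \<sigma> (x * y) = \<sigma> x * \<sigma> y)"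

definition embs :: "complex set \<Rightarrow> (complex \<Rightarrow> complex) set" where
  "embs F = (\<lambda>\<sigma>. restrict \<sigma> F) ` {\<sigma>. field_emb F \<sigma>}"

definition field_norm :: "complex set \<Rightarrow> complex \<Rightarrow> complex" where
  "field_norm F x = (\<Prod>\<sigma>\<in>embs F. \<sigma> x)"

definition galois :: "complex set \<Rightarrow> bool" where
  "galois F \<longleftrightarrow> subfield F \<and> finite (embs F) \<and> (\<forall>\<sigma>. field_emb F \<sigma> \<longrightarrow> \<sigma> ` F \<subseteq> F)"

definition gal :: "complex set \<Rightarrow> (complex \<Rightarrow> complex) set" where
  "gal F = {\<sigma> \<in> embs F. \<sigma> ` F = F}"

definition gal_exponent_two :: "complex set \<Rightarrow> bool" where
  "gal_exponent_two F \<longleftrightarrow> (\<forall>\<sigma>\<in>gal F. \<forall>x\<in>F. \<sigma> (\<sigma> x) = x) \<and> (\<exists>\<sigma>\<in>gal F. \<exists>x\<in>F. \<sigma> x \<noteq> x)"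

definition real_unit_of :: "complex set \<Rightarrow> real \<Rightarrow> bool" where
  "real_unit_of F u \<longleftrightarrow> complex_of_real u \<in> F \<and> algebraic_int u \<and> algebraic_int (1 / u)"

definition fundamental_unit :: "complex set \<Rightarrow> real \<Rightarrow> bool" where
  "fundamental_unit F \<epsilon> \<longleftrightarrow> \<epsilon> > 1 \<and> real_unit_of F \<epsilon> \<and>
     (\<forall>u. u > 1 \<and> real_unit_of F u \<longrightarrow> \<epsilon> \<le> u)"

end

theory Submission
  imports Defs
begin

lemma sqrt_int_rat:
  fixes n :: int assumes "n \<ge> 0" "sqrt (real_of_int n) \<in> \<rat>"
  shows "\<exists>m::int. n = m ^ 2"
proof -
  obtain p q where pq: "q > 0" "sqrt (real_of_int n) = real_of_int p / real_of_int q" "coprime p q"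
    using assms(2) by (metis Rats_cases')
  have "(sqrt (real_of_int n))^2 = real_of_int n" using assms(1) by simp
  then have "real_of_int n = (real_of_int p)^2 / (real_of_int q)^2" using pq(2) by (simp add: power_divide)
  then have "real_of_int n * (real_of_int q)^2 = (real_of_int p)^2" using pq(1) by (simp add: field_simps)
  then have e: "n * q^2 = p^2" by (metis of_int_eq_iff of_int_mult of_int_power)
  have "coprime (p^2) (q^2)" using pq(3) by simp
  moreover have "q^2 dvd p^2" using e by (metis dvd_triv_right)
  ultimately have "is_unit (q^2)"
    by (metis coprime_common_divisor dvd_refl)
  then have "q^2 = 1^2" by simp
  then have "q = 1" using pq(1) power2_eq_iff_nonneg[of q 1] by simp
  then show ?thesis using e by auto
qed

section \<open>Subfields\<close>

lemma subfield_UNIV: "subfield UNIV" by (simp add: subfield_def)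

lemma sf_0: "subfield F \<Longrightarrow> 0 \<in> F" by (simp add: subfield_def)
lemma sf_1: "subfield F \<Longrightarrow> 1 \<in> F" by (simp add: subfield_def)
lemma sf_add: "subfield F \<Longrightarrow> x \<in> F \<Longrightarrow> y \<in> F \<Longrightarrow> x + y \<in> F" by (simp add: subfield_def)
lemma sf_mult: "subfield F \<Longrightarrow> x \<in> F \<Longrightarrow> y \<in> F \<Longrightarrow> x * y \<in> F" by (simp add: subfield_def)
lemma sf_uminus: "subfield F \<Longrightarrow> x \<in> F \<Longrightarrow> - x \<in> F" by (simp add: subfield_def)
lemma sf_inverse: "subfield F \<Longrightarrow> x \<in> F \<Longrightarrow> inverse x \<in> F"
  by (cases "x = 0") (auto simp: subfield_def)
lemma sf_diff: "subfield F \<Longrightarrow> x \<in> F \<Longrightarrow> y \<in> F \<Longrightarrow> x - y \<in> F"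
  using sf_add[of F x "-y"] sf_uminus by simp
lemma sf_divide: "subfield F \<Longrightarrow> x \<in> F \<Longrightarrow> y \<in> F \<Longrightarrow> x / y \<in> F"
  using sf_mult[of F x "inverse y"] sf_inverse by (simp add: divide_inverse)
lemma sf_power: "subfield F \<Longrightarrow> x \<in> F \<Longrightarrow> x ^ n \<in> F"
  by (induction n) (auto intro: sf_mult sf_1)
lemma sf_of_nat: "subfield F \<Longrightarrow> of_nat n \<in> F"
  by (induction n) (auto intro: sf_add sf_1 sf_0)
lemma sf_of_int: "subfield F \<Longrightarrow> of_int n \<in> F"
proof -
  assume F: "subfield F"
  have "n = int (nat n) \<or> n = - int (nat (-n))" by arith
  then show ?thesis using sf_uminus[OF F] sf_of_nat[OF F]
    by (metis of_int_minus of_int_of_nat_eq)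
qed
lemma sf_Rats: "subfield F \<Longrightarrow> x \<in> \<rat> \<Longrightarrow> x \<in> F"
proof -
  assume F: "subfield F" and "x \<in> \<rat>"
  then obtain p q where "x = of_int p / of_int q" by (metis Rats_cases')
  then show ?thesis using F by (simp add: sf_divide sf_of_int)
qed
lemma sf_numeral: "subfield F \<Longrightarrow> numeral n \<in> F"
  using sf_of_nat[of F "numeral n"] by simp

lemma subfield_Rats: "subfield (\<rat> :: complex set)"
  by (auto simp: subfield_def)

lemma gen_field_subfield: "subfield (gen_field S)"
  unfolding gen_field_def subfield_def by auto
lemma gen_field_sub: "S \<subseteq> gen_field S"
  unfolding gen_field_def by auto
lemma gen_field_min: "subfield F \<Longrightarrow> S \<subseteq> F \<Longrightarrow> gen_field S \<subseteq> F"
  unfolding gen_field_def by auto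
lemma gen_field_mono: "S \<subseteq> T \<Longrightarrow> gen_field S \<subseteq> gen_field T"
  by (meson gen_field_min gen_field_sub gen_field_subfield order_trans)
lemma gen_field_eqI: "subfield F \<Longrightarrow> S \<subseteq> F \<Longrightarrow> (\<And>G. subfield G \<Longrightarrow> S \<subseteq> G \<Longrightarrow> F \<subseteq> G) \<Longrightarrow> gen_field S = F"
  by (meson gen_field_min gen_field_sub gen_field_subfield subset_antisym)
lemma gen_field_empty: "gen_field {} = \<rat>"
  by (rule gen_field_eqI) (auto simp: subfield_Rats sf_Rats)
lemma Rats_gen_field: "\<rat> \<subseteq> gen_field S"
  using sf_Rats gen_field_subfield by blast
lemma gen_field_insert_gen: "gen_field (insert s (gen_field T)) = gen_field (insert s T)"
proof
  show "gen_field (insert s (gen_field T)) \<subseteq> gen_field (insert s T)"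
    by (rule gen_field_min[OF gen_field_subfield])
       (meson gen_field_mono gen_field_sub insert_mono insert_subset subset_insertI order_trans)
  show "gen_field (insert s T) \<subseteq> gen_field (insert s (gen_field T))"
    by (rule gen_field_mono) (use gen_field_sub in auto)
qed
lemma gen_field_idem: "subfield F \<Longrightarrow> gen_field F = F"
  by (rule gen_field_eqI) auto

section \<open>Embeddings\<close>

context fixes F \<sigma> assumes F: "subfield F" and em: "field_emb F \<sigma>"
begin
lemma fe_add: "x \<in> F \<Longrightarrow> y \<in> F \<Longrightarrow> \<sigma> (x + y) = \<sigma> x + \<sigma> y" using em by (simp add: field_emb_def)
lemma fe_mult: "x \<in> F \<Longrightarrow> y \<in> F \<Longrightarrow> \<sigma> (x * y) = \<sigma> x * \<sigma> y" using em by (simp add: field_emb_def)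
lemma fe_1: "\<sigma> 1 = 1" using em by (simp add: field_emb_def)
lemma fe_0: "\<sigma> 0 = 0" using fe_add[of 0 0] sf_0[OF F] by simp
lemma fe_uminus: "x \<in> F \<Longrightarrow> \<sigma> (- x) = - \<sigma> x"
  using fe_add[of x "-x"] sf_uminus[OF F, of x] fe_0 by (simp add: eq_neg_iff_add_eq_0 add.commute)
lemma fe_diff: "x \<in> F \<Longrightarrow> y \<in> F \<Longrightarrow> \<sigma> (x - y) = \<sigma> x - \<sigma> y"
  using fe_add[of x "-y"] fe_uminus[of y] sf_uminus[OF F, of y] by simp
lemma fe_inverse: "x \<in> F \<Longrightarrow> \<sigma> (inverse x) = inverse (\<sigma> x)"
proof (cases "x = 0")
  case True then show ?thesis using fe_0 by simp
next
  case False
  assume x: "x \<in> F"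
  have "\<sigma> (inverse x) * \<sigma> x = 1" using fe_mult[of "inverse x" x] x False sf_inverse[OF F x] fe_1 by simp
  then show ?thesis by (metis inverse_unique mult.commute)
qed
lemma fe_divide: "x \<in> F \<Longrightarrow> y \<in> F \<Longrightarrow> \<sigma> (x / y) = \<sigma> x / \<sigma> y"
  using fe_mult[of x "inverse y"] fe_inverse[of y] sf_inverse[OF F, of y] by (simp add: divide_inverse)
lemma fe_power: "x \<in> F \<Longrightarrow> \<sigma> (x ^ n) = \<sigma> x ^ n"
  by (induction n) (auto simp: fe_1 fe_mult sf_power[OF F])
lemma fe_of_nat: "\<sigma> (of_nat n) = of_nat n"
  by (induction n) (auto simp: fe_0 fe_1 fe_add sf_of_nat[OF F] sf_1[OF F])
lemma fe_of_int: "\<sigma> (of_int n) = of_int n"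
proof -
  have "n = int (nat n) \<or> n = - int (nat (-n))" by arith
  then show ?thesis using fe_uminus fe_of_nat sf_of_nat[OF F]
    by (metis of_int_minus of_int_of_nat_eq)
qed
lemma fe_Rats: "x \<in> \<rat> \<Longrightarrow> \<sigma> x = x"
proof -
  assume "x \<in> \<rat>"
  then obtain p q where "x = of_int p / of_int q" by (metis Rats_cases')
  then show ?thesis by (simp add: fe_divide sf_of_int[OF F] fe_of_int)
qed
lemma fe_sq_rat: "s \<in> F \<Longrightarrow> s^2 \<in> \<rat> \<Longrightarrow> \<sigma> s = s \<or> \<sigma> s = - s"
proof -
  assume "s \<in> F" "s^2 \<in> \<rat>"
  then have "(\<sigma> s)^2 = s^2" using fe_power[of s 2] fe_Rats by simp
  then show ?thesis by (simp add: power2_eq_iff)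
qed
end

lemma fe_agree:
  assumes "field_emb (gen_field S) \<sigma>" "field_emb (gen_field S) \<tau>" "\<And>x. x \<in> S \<Longrightarrow> \<sigma> x = \<tau> x"
  shows "\<And>x. x \<in> gen_field S \<Longrightarrow> \<sigma> x = \<tau> x"
proof -
  let ?F = "gen_field S"
  have F: "subfield ?F" by (rule gen_field_subfield)
  let ?E = "{x \<in> ?F. \<sigma> x = \<tau> x}"
  have "subfield ?E"
    unfolding subfield_def using F assms(1,2)
    by (auto simp: fe_0 fe_1 fe_add fe_mult fe_uminus fe_inverse sf_0 sf_1 sf_add sf_mult sf_uminus sf_inverse)
  moreover have "S \<subseteq> ?E" using assms(3) gen_field_sub by blast
  ultimately have "?F \<subseteq> ?E" by (rule gen_field_min)
  then show "\<And>x. x \<in> ?F \<Longrightarrow> \<sigma> x = \<tau> x" by blast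
qed

lemma field_emb_id: "field_emb F id" by (simp add: field_emb_def)
lemma field_emb_id': "field_emb F (\<lambda>x. x)" by (simp add: field_emb_def)


section \<open>Quadratic extensions\<close>

definition qconj :: "complex set \<Rightarrow> complex \<Rightarrow> complex \<Rightarrow> complex" where
  "qconj F0 s z = (SOME w. \<exists>u\<in>F0. \<exists>v\<in>F0. z = u + v * s \<and> w = u - v * s)"

context fixes F0 :: "complex set" and s :: complex assumes F0: "subfield F0" and s2: "s^2 \<in> F0" and sn: "s \<notin> F0"
begin

lemma quad_unique:
  assumes "u \<in> F0" "v \<in> F0" "u' \<in> F0" "v' \<in> F0" "u + v * s = u' + v' * s"
  shows "u = u' \<and> v = v'"
proof (cases "v = v'")
  case True then show ?thesis using assms by simp
next
  case False
  then have "s = (u' - u) / (v - v')" using assms(5) by (simp add: field_simps)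
  then have "s \<in> F0" using assms F0 by (simp add: sf_divide sf_diff)
  then show ?thesis using sn by simp
qed

lemma qconj_eq: "u \<in> F0 \<Longrightarrow> v \<in> F0 \<Longrightarrow> qconj F0 s (u + v * s) = u - v * s"
  unfolding qconj_def
  by (rule someI2[of _ "u - v * s"]) (auto dest: quad_unique)

lemma qconj_F0: "u \<in> F0 \<Longrightarrow> qconj F0 s u = u"
  using qconj_eq[of u 0] sf_0[OF F0] by simp

lemma qconj_s: "qconj F0 s s = - s"
  using qconj_eq[of 0 1] sf_0[OF F0] sf_1[OF F0] by simp

definition "QL = {z. \<exists>u\<in>F0. \<exists>v\<in>F0. z = u + v * s}"

lemma QL_subfield: "subfield QL"
proof -
  have add: "x + y \<in> QL" if "x \<in> QL" "y \<in> QL" for x y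
  proof -
    from that obtain u v u' v' where "u\<in>F0" "v\<in>F0" "u'\<in>F0" "v'\<in>F0" "x = u + v * s" "y = u' + v' * s"
      unfolding QL_def by blast
    then show ?thesis unfolding QL_def
      by (intro CollectI bexI[of _ "u+u'"] bexI[of _ "v+v'"]) (auto simp: algebra_simps sf_add[OF F0])
  qed
  have mult: "x * y \<in> QL" if "x \<in> QL" "y \<in> QL" for x y
  proof -
    from that obtain u v u' v' where uv: "u\<in>F0" "v\<in>F0" "u'\<in>F0" "v'\<in>F0" "x = u + v * s" "y = u' + v' * s"
      unfolding QL_def by blast
    have "x * y = (u * u' + v * v' * s^2) + (u * v' + v * u') * s" using uv by (simp add: algebra_simps power2_eq_square)
    then show ?thesis unfolding QL_def using uv s2 F0
      by (intro CollectI bexI[of _ "u * u' + v * v' * s^2"] bexI[of _ "u * v' + v * u'"])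
         (auto simp: sf_add sf_mult)
  qed
  have neg: "- x \<in> QL" if "x \<in> QL" for x
  proof -
    from that obtain u v where uv: "u\<in>F0" "v\<in>F0" "x = u + v * s"
      unfolding QL_def by blast
    then show ?thesis unfolding QL_def using F0
      by (intro CollectI bexI[of _ "-u"] bexI[of _ "-v"]) (auto simp: sf_uminus)
  qed
  have inv: "inverse x \<in> QL" if "x \<in> QL" "x \<noteq> 0" for x
  proof -
    from that obtain u v where uv: "u\<in>F0" "v\<in>F0" "x = u + v * s"
      unfolding QL_def by blast
    define n where "n = u^2 - v^2 * s^2"
    have nF: "n \<in> F0" unfolding n_def using uv s2 F0 by (simp add: sf_diff sf_mult sf_power)
    have n0: "n \<noteq> 0"
    proof
      assume "n = 0"
      show False
      proof (cases "v = 0")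
        case True then show False using \<open>n = 0\<close> uv that(2) by (simp add: n_def)
      next
        case False
        then have "s^2 = (u/v)^2" using \<open>n = 0\<close> by (simp add: n_def field_simps power2_eq_square)
        then have "s = u/v \<or> s = - (u/v)" by (simp add: power2_eq_iff)
        moreover have "u/v \<in> F0" using uv F0 by (simp add: sf_divide)
        ultimately show False using sn sf_uminus[OF F0] by auto
      qed
    qed
    have "(u + v * s) * (u - v * s) = n" by (simp add: n_def algebra_simps power2_eq_square)
    then have "x * ((u/n) + (-v/n) * s) = n / n" using uv(3) by (simp add: algebra_simps add_divide_distrib diff_divide_distrib)
    then have "x * ((u/n) + (-v/n) * s) = 1" using n0 by simp
    then have "inverse x = (u/n) + (-v/n) * s" by (metis inverse_unique)
    then show ?thesis unfolding QL_def using uv nF F0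
      by (intro CollectI bexI[of _ "u/n"] bexI[of _ "-v/n"]) (auto simp: sf_divide sf_uminus)
  qed
  have "0 \<in> QL" unfolding QL_def using sf_0[OF F0] by (intro CollectI bexI[of _ 0]) auto
  moreover have "1 \<in> QL" unfolding QL_def using sf_0[OF F0] sf_1[OF F0] by (intro CollectI bexI[of _ 1] bexI[of _ 0]) auto
  ultimately show ?thesis unfolding subfield_def using add mult neg inv by simp
qed

lemma quad_gen: "gen_field (insert s F0) = QL"
proof (rule gen_field_eqI[OF QL_subfield])
  have "s \<in> QL" unfolding QL_def using sf_0[OF F0] sf_1[OF F0]
    by (intro CollectI bexI[of _ 0] bexI[of _ 1]) auto
  moreover have "u \<in> QL" if "u \<in> F0" for u unfolding QL_def using sf_0[OF F0] that
    by (intro CollectI bexI[of _ u] bexI[of _ 0]) auto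
  ultimately show "insert s F0 \<subseteq> QL" by blast
  show "QL \<subseteq> G" if "subfield G" "insert s F0 \<subseteq> G" for G
  proof
    fix z assume "z \<in> QL"
    then obtain u v where "u \<in> F0" "v \<in> F0" "z = u + v * s" unfolding QL_def by blast
    then show "z \<in> G" using that by (auto intro!: sf_add sf_mult)
  qed
qed

lemma qconj_emb: "field_emb QL (qconj F0 s)"
  unfolding field_emb_def
proof (intro conjI ballI)
  show "qconj F0 s 1 = 1" using qconj_F0 sf_1[OF F0] by simp
  fix x y assume "x \<in> QL" "y \<in> QL"
  then obtain u v u' v' where uv: "u\<in>F0" "v\<in>F0" "u'\<in>F0" "v'\<in>F0" "x = u + v * s" "y = u' + v' * s"
      unfolding QL_def by blast
  have eq: "x + y = (u+u') + (v+v') * s" using uv by (simp add: algebra_simps)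
  have "qconj F0 s ((u+u') + (v+v') * s) = (u+u') - (v+v') * s"
    using qconj_eq[of "u+u'" "v+v'"] uv sf_add[OF F0] by blast
  then have qxy: "qconj F0 s (x + y) = (u+u') - (v+v') * s" using eq by metis
  have qx: "qconj F0 s x = u - v * s" using uv qconj_eq by simp
  have qy: "qconj F0 s y = u' - v' * s" using uv qconj_eq by simp
  show "qconj F0 s (x + y) = qconj F0 s x + qconj F0 s y"
    unfolding qxy qx qy by (simp add: algebra_simps)
  have "x * y = (u * u' + v * v' * s^2) + (u * v' + v * u') * s" using uv by (simp add: algebra_simps power2_eq_square)
  moreover have "(u * u' + v * v' * s^2) \<in> F0" "(u * v' + v * u') \<in> F0" using uv s2 F0 by (auto simp: sf_add sf_mult)
  ultimately have "qconj F0 s (x * y) = (u * u' + v * v' * s^2) - (u * v' + v * u') * s"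
    using qconj_eq by metis
  also have "\<dots> = (u - v * s) * (u' - v' * s)" by (simp add: algebra_simps power2_eq_square)
  finally show "qconj F0 s (x * y) = qconj F0 s x * qconj F0 s y"
    using qx qy by simp
qed

lemma qconj_QL: "z \<in> QL \<Longrightarrow> qconj F0 s z \<in> QL \<and> qconj F0 s (qconj F0 s z) = z"
proof -
  assume "z \<in> QL"
  then obtain u v where uv: "u\<in>F0" "v\<in>F0" "z = u + v * s" unfolding QL_def by blast
  have "qconj F0 s z = u + (-v) * s" using uv qconj_eq by simp
  moreover have mv: "-v \<in> F0" using uv F0 by (simp add: sf_uminus)
  moreover have "qconj F0 s (u + (-v) * s) = z" using qconj_eq[OF uv(1) mv] uv(3) by simp
  moreover have "u + (-v) * s \<in> QL" unfolding QL_def using uv mv by blast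
  ultimately show ?thesis by simp
qed

lemma qconj_image: "qconj F0 s ` QL = QL"
proof
  show "qconj F0 s ` QL \<subseteq> QL" using qconj_QL by blast
  show "QL \<subseteq> qconj F0 s ` QL"
  proof
    fix z assume "z \<in> QL"
    then have "qconj F0 s z \<in> QL" "z = qconj F0 s (qconj F0 s z)" using qconj_QL by auto
    then show "z \<in> qconj F0 s ` QL" by blast
  qed
qed

end



lemma gen_field_single_QL:
  assumes "s^2 \<in> \<rat>" "s \<notin> \<rat>"
  shows "gen_field {s} = QL \<rat> s"
proof -
  have "gen_field {s} = gen_field (insert s (gen_field {}))" by (simp add: gen_field_insert_gen)
  also have "\<dots> = QL \<rat> s" unfolding gen_field_empty by (rule quad_gen[OF subfield_Rats assms])
  finally show ?thesis .
qed

lemma embs_quadQ: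
  assumes s2: "s^2 \<in> \<rat>" and sn: "s \<notin> \<rat>"
  shows "embs (gen_field {s}) = {restrict id (gen_field {s}), restrict (qconj \<rat> s) (gen_field {s})}"
proof -
  let ?L = "gen_field {s}"
  have L: "?L = QL \<rat> s" by (rule gen_field_single_QL[OF assms])
  have sL: "s \<in> ?L" using gen_field_sub by blast
  have Lsf: "subfield ?L" by (rule gen_field_subfield)
  have qe: "field_emb ?L (qconj \<rat> s)" unfolding L by (rule qconj_emb[OF subfield_Rats assms])
  have "restrict \<sigma> ?L \<in> {restrict id ?L, restrict (qconj \<rat> s) ?L}" if em: "field_emb ?L \<sigma>" for \<sigma>
  proof -
    have "\<sigma> s = s \<or> \<sigma> s = - s" using fe_sq_rat[OF Lsf em sL s2] .
    then show ?thesis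
    proof
      assume "\<sigma> s = s"
      then have "\<And>x. x \<in> ?L \<Longrightarrow> \<sigma> x = id x"
        using fe_agree[OF em field_emb_id] by auto
      then have "restrict \<sigma> ?L = restrict id ?L" by (auto simp: restrict_def)
      then show ?thesis by simp
    next
      assume "\<sigma> s = - s"
      then have "\<And>x. x \<in> ?L \<Longrightarrow> \<sigma> x = qconj \<rat> s x"
        using fe_agree[OF em qe] qconj_s[OF subfield_Rats assms] by auto
      then have "restrict \<sigma> ?L = restrict (qconj \<rat> s) ?L" by (auto simp: restrict_def)
      then show ?thesis by simp
    qed
  qed
  moreover have "field_emb ?L id" by (rule field_emb_id)
  ultimately show ?thesis unfolding embs_def using qe by blast
qed

lemma norm_quadQ:
  assumes s2: "s^2 \<in> \<rat>" and sn: "s \<notin> \<rat>" and u: "u \<in> \<rat>" and v: "v \<in> \<rat>"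
  shows "field_norm (gen_field {s}) (u + v * s) = u^2 - v^2 * s^2"
proof -
  let ?L = "gen_field {s}"
  have L: "?L = QL \<rat> s" by (rule gen_field_single_QL[OF assms(1,2)])
  have s0: "s \<noteq> 0" using sn by auto
  have sL: "s \<in> ?L" using gen_field_sub by blast
  have "restrict id ?L s \<noteq> restrict (qconj \<rat> s) ?L s"
    using sL qconj_s[OF subfield_Rats s2 sn] s0 by simp
  then have ne: "restrict id ?L \<noteq> restrict (qconj \<rat> s) ?L" by metis
  have zL: "u + v * s \<in> ?L" unfolding L QL_def[OF subfield_Rats s2 sn] using u v by blast
  have "field_norm ?L (u + v * s) = restrict id ?L (u + v * s) * restrict (qconj \<rat> s) ?L (u + v * s)"
    unfolding field_norm_def embs_quadQ[OF s2 sn] using ne by simp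
  also have "\<dots> = (u + v * s) * (u - v * s)"
    using zL qconj_eq[OF subfield_Rats s2 sn u v] by simp
  finally show ?thesis by (simp add: algebra_simps power2_eq_square)
qed

lemma galois_sq:
  assumes fin: "finite S" and sq: "\<And>s. s \<in> S \<Longrightarrow> s^2 \<in> \<rat>"
  shows "galois (gen_field S) \<and> (\<forall>\<sigma>\<in>gal (gen_field S). \<forall>x\<in>gen_field S. \<sigma> (\<sigma> x) = x)"
proof -
  let ?F = "gen_field S"
  have F: "subfield ?F" by (rule gen_field_subfield)
  have SF: "S \<subseteq> ?F" by (rule gen_field_sub)
  have pm: "\<sigma> s = s \<or> \<sigma> s = - s" if "field_emb ?F \<sigma>" "s \<in> S" for \<sigma> s
    using fe_sq_rat[OF F that(1)] SF that(2) sq by blast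
  have maps: "\<sigma> ` ?F \<subseteq> ?F" if em: "field_emb ?F \<sigma>" for \<sigma>
  proof -
    let ?E = "{x \<in> ?F. \<sigma> x \<in> ?F}"
    have "subfield ?E"
      unfolding subfield_def using F em
      by (auto simp: fe_0 fe_1 fe_add fe_mult fe_uminus fe_inverse sf_0 sf_1 sf_add sf_mult sf_uminus sf_inverse)
    moreover have "S \<subseteq> ?E" using pm[OF em] SF sf_uminus[OF F] by fastforce
    ultimately have "?F \<subseteq> ?E" by (rule gen_field_min)
    then show ?thesis by blast
  qed
  have fin_embs: "finite (embs ?F)"
  proof -
    let ?f = "\<lambda>g. restrict g S"
    have inj: "inj_on ?f (embs ?F)"
    proof (rule inj_onI)
      fix g h assume "g \<in> embs ?F" "h \<in> embs ?F" and eq: "?f g = ?f h"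
      then obtain \<sigma> \<tau> where st: "field_emb ?F \<sigma>" "field_emb ?F \<tau>" "g = restrict \<sigma> ?F" "h = restrict \<tau> ?F"
        unfolding embs_def by blast
      have "\<And>x. x \<in> S \<Longrightarrow> \<sigma> x = \<tau> x"
      proof -
        fix x assume "x \<in> S"
        then have "?f g x = ?f h x" using eq by simp
        then show "\<sigma> x = \<tau> x" using \<open>x \<in> S\<close> SF st(3,4) by auto
      qed
      then have "\<And>x. x \<in> ?F \<Longrightarrow> \<sigma> x = \<tau> x" using fe_agree[OF st(1,2)] by blast
      then show "g = h" using st(3,4) by (auto simp: restrict_def)
    qed
    have "?f ` embs ?F \<subseteq> PiE S (\<lambda>s. {s, -s})"
    proof
      fix k assume "k \<in> ?f ` embs ?F"
      then obtain \<sigma> where st: "field_emb ?F \<sigma>" "k = restrict (restrict \<sigma> ?F) S"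
        unfolding embs_def by blast
      then have "k = restrict \<sigma> S" using SF by (auto simp: restrict_def fun_eq_iff)
      then show "k \<in> PiE S (\<lambda>s. {s, -s})" using pm[OF st(1)] by auto
    qed
    moreover have "finite (PiE S (\<lambda>s. {s, -s}))" using fin by (simp add: finite_PiE)
    ultimately have "finite (?f ` embs ?F)" by (rule finite_subset)
    then show ?thesis using inj by (rule finite_imageD)
  qed
  have exp2: "\<sigma> (\<sigma> x) = x" if sg: "\<sigma> \<in> gal ?F" and xF: "x \<in> ?F" for \<sigma> x
  proof -
    obtain \<sigma>0 where s0: "field_emb ?F \<sigma>0" "\<sigma> = restrict \<sigma>0 ?F"
      using sg unfolding gal_def embs_def by blast
    have m: "\<sigma>0 y \<in> ?F" if "y \<in> ?F" for y using maps[OF s0(1)] that by blast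
    have emb2: "field_emb ?F (\<lambda>y. \<sigma>0 (\<sigma>0 y))"
      unfolding field_emb_def using s0(1) m F
      by (auto simp: fe_1 fe_add fe_mult)
    have "\<sigma>0 (\<sigma>0 s) = s" if "s \<in> S" for s
      using pm[OF s0(1) that] fe_uminus[OF F s0(1)] SF that by auto
    then have "\<sigma>0 (\<sigma>0 x) = x" using fe_agree[OF emb2 field_emb_id'] xF by blast
    then show ?thesis using s0(2) m xF by simp
  qed
  show ?thesis unfolding galois_def using F fin_embs maps exp2 by blast
qed



lemma rat_sq_neg1: "(x::complex) \<in> \<rat> \<Longrightarrow> x^2 \<noteq> -1"
proof
  assume "x \<in> \<rat>" "x^2 = -1"
  then obtain r where "x = of_rat r" by (auto elim: Rats_cases)
  then have "of_rat (r^2) = (of_rat (-1) :: complex)" using \<open>x^2 = -1\<close> by (simp add: of_rat_power)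
  then have "r^2 = -1" by (simp only: of_rat_eq_iff)
  moreover have "r^2 \<ge> 0" by simp
  ultimately show False by simp
qed

lemma sq_eq_rat:
  fixes D y z :: complex
  assumes "(D * y)^2 = z^2" "y \<in> \<rat>" "z \<in> \<rat>" "y \<noteq> 0"
  shows "D \<in> \<rat>"
proof -
  have "D * y = z \<or> D * y = - z" using assms(1) by (simp add: power2_eq_iff)
  then have "D = z / y \<or> D = - z / y" using assms(4) by (auto simp: field_simps)
  then show ?thesis using assms(2,3) by auto
qed

lemma G2:
  fixes P Q \<alpha> \<beta> :: complex
  assumes F: "subfield F" and P2: "P^2 \<in> \<rat>" and Q2: "Q^2 \<in> \<rat>" and nPQ: "P * Q \<notin> \<rat>"
    and al: "\<alpha> \<in> \<rat>" "\<alpha> \<noteq> 0" and be: "\<beta> \<in> \<rat>" "\<beta> \<noteq> 0" and y: "\<alpha> * P + \<beta> * Q \<in> F"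
  shows "P \<in> F \<and> Q \<in> F"
proof -
  note R = sf_Rats[OF F]
  define y where "y = \<alpha> * P + \<beta> * Q"
  have yF: "y \<in> F" using y by (simp add: y_def)
  have "y^2 = (\<alpha>^2 * P^2 + \<beta>^2 * Q^2) + (2 * \<alpha> * \<beta>) * (P * Q)"
    unfolding y_def by (simp add: algebra_simps power2_eq_square)
  then have "P * Q = (y^2 - (\<alpha>^2 * P^2 + \<beta>^2 * Q^2)) / (2 * \<alpha> * \<beta>)"
    using al be by (simp add: field_simps)
  moreover have "\<alpha>^2 * P^2 + \<beta>^2 * Q^2 \<in> \<rat>" "2 * \<alpha> * \<beta> \<in> \<rat>" using al be P2 Q2 by auto
  ultimately have PQF: "P * Q \<in> F" using yF F R by (simp add: sf_divide sf_diff sf_power)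
  define d where "d = \<alpha>^2 * P^2 - \<beta>^2 * Q^2"
  have dQ: "d \<in> \<rat>" using al be P2 Q2 by (simp add: d_def)
  have d0: "d \<noteq> 0"
  proof
    assume "d = 0"
    then have "(\<alpha> * P^2)^2 = (\<beta> * (P * Q))^2" unfolding d_def by (simp add: algebra_simps power2_eq_square)
    then have "\<alpha> * P^2 = \<beta> * (P * Q) \<or> \<alpha> * P^2 = - (\<beta> * (P * Q))"
      using power2_eq_iff[of "\<alpha> * P^2" "\<beta> * (P * Q)"] by blast
    then have "(P * Q) * \<beta> = \<alpha> * P^2 \<or> (P * Q) * \<beta> = - (\<alpha> * P^2)"
      by (auto simp: algebra_simps)
    then have "P * Q = \<alpha> * P^2 / \<beta> \<or> P * Q = - (\<alpha> * P^2) / \<beta>" using be by (auto simp: field_simps)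
    then show False using nPQ al be P2 by auto
  qed
  have "\<alpha> * P^2 * y - \<beta> * (y * (P * Q)) = d * P"
    unfolding y_def d_def by (simp add: algebra_simps power2_eq_square)
  then have "P = (\<alpha> * P^2 * y - \<beta> * (y * (P * Q))) / d" using d0 by simp
  moreover have "\<alpha> * P^2 \<in> F" "\<beta> \<in> F" "d \<in> F" using R al be P2 dQ by auto
  ultimately have PF: "P \<in> F" using F yF PQF by (metis sf_divide sf_diff sf_mult)
  have "Q = (y - \<alpha> * P) / \<beta>" using be unfolding y_def by (simp add: field_simps)
  then have "Q \<in> F" using F PF yF R al be by (metis sf_divide sf_diff sf_mult)
  then show ?thesis using PF by simp
qed

context
  fixes A B :: complex
  assumes hA: "A^2 \<in> \<rat>" and hB: "B^2 \<in> \<rat>" and nA: "A \<notin> \<rat>" and nB: "B \<notin> \<rat>" and nC: "A * B \<notin> \<rat>"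
begin

lemma A0: "A \<noteq> 0" using nA by auto
lemma B0: "B \<noteq> 0" using nB by auto
lemma A20: "A^2 \<noteq> 0" using A0 by simp
lemma B20: "B^2 \<noteq> 0" using B0 by simp

lemma nAAB: "A * (A * B) \<notin> \<rat>"
proof
  assume "A * (A * B) \<in> \<rat>"
  then have "(A * (A * B)) / A^2 \<in> \<rat>" using hA by simp
  then show False using nB A0 by (simp add: power2_eq_square)
qed

lemma nBAB: "B * (A * B) \<notin> \<rat>"
proof
  assume "B * (A * B) \<in> \<rat>"
  then have "(B * (A * B)) / B^2 \<in> \<rat>" using hB by simp
  then show False using nA B0 by (simp add: power2_eq_square)
qed

lemma hC: "(A * B)^2 \<in> \<rat>" using hA hB by (simp add: power_mult_distrib)

lemma gen_lemma:
  assumes F: "subfield F" and c: "c1 \<in> \<rat>" "c2 \<in> \<rat>" "c3 \<in> \<rat>"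
    and y: "c1 * A + c2 * B + c3 * (A * B) \<in> F"
    and nz: "\<not> (c1 = 0 \<and> c2 = 0)" "\<not> (c1 = 0 \<and> c3 = 0)" "\<not> (c2 = 0 \<and> c3 = 0)"
  shows "A \<in> F \<and> B \<in> F"
proof -
  note R = sf_Rats[OF F]
  consider "c3 = 0" | "c2 = 0" | "c1 = 0" | "c1 \<noteq> 0" "c2 \<noteq> 0" "c3 \<noteq> 0" by blast
  then show ?thesis
  proof cases
    case 1
    then show ?thesis using G2[OF F hA hB nC c(1) _ c(2)] y nz by auto
  next
    case 2
    then have "A \<in> F \<and> A * B \<in> F" using G2[OF F hA hC nAAB c(1) _ c(3)] y nz by auto
    moreover have "B = (A * B) / A" using A0 by simp
    ultimately show ?thesis using F by (metis sf_divide)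
  next
    case 3
    then have "B \<in> F \<and> A * B \<in> F" using G2[OF F hB hC nBAB c(2) _ c(3)] y nz by auto
    moreover have "A = (A * B) / B" using B0 by simp
    ultimately show ?thesis using F by (metis sf_divide)
  next
    case 4
    define y where "y = c1 * A + c2 * B + c3 * (A * B)"
    have yF: "y \<in> F" using y y_def by simp
    define q where "q = c1^2 * A^2 + c2^2 * B^2 + c3^2 * (A^2 * B^2)"
    have qQ: "q \<in> \<rat>" unfolding q_def using c hA hB by simp
    define z where "z = c1 * c2 * (A * B) + c1 * c3 * A^2 * B + c2 * c3 * B^2 * A"
    have "y^2 = q + 2 * z" unfolding y_def q_def z_def by (simp add: algebra_simps power2_eq_square)
    then have zq: "z = (y^2 - q) / 2" by simp
    have "(y^2 - q) / 2 \<in> F" using F yF R qQ by (intro sf_divide sf_diff sf_power sf_numeral) auto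
    then have zF: "z \<in> F" unfolding zq .
    have "c1 * c2 * y - c3 * z = (c2 * (c1^2 - c3^2 * B^2)) * A + (c1 * (c2^2 - c3^2 * A^2)) * B"
      unfolding y_def z_def by (simp add: algebra_simps power2_eq_square)
    moreover have "c1 * c2 * y - c3 * z \<in> F" using F yF zF R c by (simp add: sf_diff sf_mult)
    moreover have "c2 * (c1^2 - c3^2 * B^2) \<noteq> 0"
    proof
      assume "c2 * (c1^2 - c3^2 * B^2) = 0"
      then have "(B * c3)^2 = c1^2" using 4 by (simp add: algebra_simps power_mult_distrib)
      then show False using sq_eq_rat[of B c3 c1] c 4 nB by auto
    qed
    moreover have "c1 * (c2^2 - c3^2 * A^2) \<noteq> 0"
    proof
      assume "c1 * (c2^2 - c3^2 * A^2) = 0"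
      then have "(A * c3)^2 = c2^2" using 4 by (simp add: algebra_simps power_mult_distrib)
      then show False using sq_eq_rat[of A c3 c2] c 4 nA by auto
    qed
    moreover have "c2 * (c1^2 - c3^2 * B^2) \<in> \<rat>" "c1 * (c2^2 - c3^2 * A^2) \<in> \<rat>"
      using c hA hB by auto
    ultimately show ?thesis using G2[OF F hA hB nC] by metis
  qed
qed

lemma B_notin_k1: "B \<notin> QL \<rat> A"
proof
  assume "B \<in> QL \<rat> A"
  then obtain u v where uv: "u \<in> \<rat>" "v \<in> \<rat>" "B = u + v * A"
    unfolding QL_def[OF subfield_Rats hA nA] by blast
  have "B^2 = (u^2 + v^2 * A^2) + (2 * u * v) * A" using uv(3) by (simp add: algebra_simps power2_eq_square)
  then have e: "(2 * u * v) * A = B^2 - (u^2 + v^2 * A^2)" by simp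
  show False
  proof (cases "u * v = 0")
    case False
    then have "A = (B^2 - (u^2 + v^2 * A^2)) / (2 * u * v)" using e by (simp add: field_simps)
    then show False using nA uv hA hB by (metis Rats_add Rats_diff Rats_divide Rats_mult Rats_power Rats_number_of numeral_One Rats_1)
  next
    case True
    then show False
    proof (cases "u = 0")
      case True
      then have "A * B = v * A^2" using uv by (simp add: power2_eq_square algebra_simps)
      then show False using nC uv hA by simp
    next
      case False
      have v0: "v = 0" using \<open>u * v = 0\<close> False by simp
      have "B = u" using uv(3) v0 by simp
      then show False using nB uv(1) by simp
    qed
  qed
qed

end


lemma rho_identity:
  fixes A B x1 x2 x3 y1 y2 y3 a b s1 s2 s3 :: complex
  assumes "A^2 = a" "B^2 = b" "x1^2 - y1^2 * a = -1" "x2^2 - y2^2 * b = -1" "x3^2 - y3^2 * (a*b) = -1"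
    and s: "s1^2 = 1" "s2^2 = 1" "s3^2 = 1" "s1 * s2 * s3 = -1"
  defines "e1 \<equiv> x1 + y1*A" and "e2 \<equiv> x2 + y2*B" and "e3 \<equiv> x3 + y3*(A*B)"
  defines "f1 \<equiv> x1 - y1*A" and "f2 \<equiv> x2 - y2*B" and "f3 \<equiv> x3 - y3*(A*B)"
  defines "\<eta> \<equiv> e1*e2*e3"
  shows "(\<eta> + s1*e1 + s2*e2 + s3*e3)^2 = 4*(x1*x2*x3 + y1*y2*y3*a*b + s1*x1 + s2*x2 + s3*x3) * \<eta>"
proof -
  have n1: "e1*f1 = -1" using assms(1,3) unfolding e1_def f1_def by (simp add: algebra_simps power2_eq_square)
  have n2: "e2*f2 = -1" using assms(2,4) unfolding e2_def f2_def by (simp add: algebra_simps power2_eq_square)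
  have n3: "e3*f3 = -1" using assms(1,2,5) unfolding e3_def f3_def by (simp add: algebra_simps power2_eq_square)
  have q1: "e1^2 = \<eta> * (e1*f2*f3)" unfolding \<eta>_def
  proof -
    have "e1*e2*e3*(e1*f2*f3) = e1^2 * (e2*f2)*(e3*f3)" by (simp add: algebra_simps power2_eq_square)
    then show "e1^2 = e1*e2*e3*(e1*f2*f3)" using n2 n3 by simp
  qed
  have q2: "e2^2 = \<eta> * (f1*e2*f3)" unfolding \<eta>_def
  proof -
    have "e1*e2*e3*(f1*e2*f3) = e2^2 * (e1*f1)*(e3*f3)" by (simp add: algebra_simps power2_eq_square)
    then show "e2^2 = e1*e2*e3*(f1*e2*f3)" using n1 n3 by simp
  qed
  have q3: "e3^2 = \<eta> * (f1*f2*e3)" unfolding \<eta>_def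
  proof -
    have "e1*e2*e3*(f1*f2*e3) = e3^2 * (e1*f1)*(e2*f2)" by (simp add: algebra_simps power2_eq_square)
    then show "e3^2 = e1*e2*e3*(f1*f2*e3)" using n1 n2 by simp
  qed
  have p12: "e1*e2 = - \<eta> * f3" unfolding \<eta>_def using n3 by (simp add: algebra_simps)
  have p13: "e1*e3 = - \<eta> * f2"
  proof -
    have "- \<eta> * f2 = - (e1*e3*(e2*f2))" unfolding \<eta>_def by (simp add: algebra_simps)
    then show ?thesis using n2 by simp
  qed
  have p23: "e2*e3 = - \<eta> * f1"
  proof -
    have "- \<eta> * f1 = - (e2*e3*(e1*f1))" unfolding \<eta>_def by (simp add: algebra_simps)
    then show ?thesis using n1 by simp
  qed
  have tr: "\<eta> + e1*f2*f3 + f1*e2*f3 + f1*f2*e3 = 4*(x1*x2*x3 + y1*y2*y3*a*b)"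
  proof -
    have "\<eta> + e1*f2*f3 + f1*e2*f3 + f1*f2*e3 = 4*(x1*x2*x3 + y1*y2*y3*(A^2)*(B^2))"
      unfolding \<eta>_def e1_def e2_def e3_def f1_def f2_def f3_def
      by (simp add: algebra_simps power2_eq_square)
    then show ?thesis using assms(1,2) by simp
  qed
  have ss: "s1 * s2 = -s3" "s1 * s3 = -s2" "s2 * s3 = -s1" using s by algebra+
  have "(\<eta> + s1*e1 + s2*e2 + s3*e3)^2 = \<eta>^2 + 2*\<eta>*(s1*e1 + s2*e2 + s3*e3)
      + (s1^2*e1^2 + s2^2*e2^2 + s3^2*e3^2) + 2*((s1 * s2)*(e1*e2) + (s1 * s3)*(e1*e3) + (s2 * s3)*(e2*e3))"
    by (simp add: algebra_simps power2_eq_square)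
  also have "\<dots> = \<eta>*(\<eta> + e1*f2*f3 + f1*e2*f3 + f1*f2*e3) + 2*\<eta>*(s1*(e1+f1) + s2*(e2+f2) + s3*(e3+f3))"
    unfolding ss q1 q2 q3 p12 p13 p23 using s by (simp add: algebra_simps power2_eq_square)
  also have "\<dots> = 4*(x1*x2*x3 + y1*y2*y3*a*b + s1*x1 + s2*x2 + s3*x3) * \<eta>"
    unfolding tr by (simp add: e1_def f1_def e2_def f2_def e3_def f3_def algebra_simps)
  finally show ?thesis .
qed


lemma nz_xy:
  fixes x y D :: complex
  assumes "x \<in> \<rat>" "y \<in> \<rat>" "D \<notin> \<rat>" "x^2 - y^2 * D^2 = -1"
  shows "x \<noteq> 0 \<and> y \<noteq> 0"
proof
  show y0: "y \<noteq> 0"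
  proof
    assume "y = 0" then have "x^2 = -1" using assms(4) by simp
    then show False using rat_sq_neg1 assms(1) by blast
  qed
  show "x \<noteq> 0"
  proof
    assume "x = 0" then have "(D * y)^2 = 1^2" using assms(4) by (simp add: power_mult_distrib algebra_simps)
    then show False using sq_eq_rat[of D y 1] assms y0 by simp
  qed
qed

context
  fixes A B :: complex
  assumes hA: "A^2 \<in> \<rat>" and hB: "B^2 \<in> \<rat>" and nA: "A \<notin> \<rat>" and nB: "B \<notin> \<rat>" and nC: "A * B \<notin> \<rat>"
begin

lemma eta_gen:
  fixes x1 x2 x3 y1 y2 y3 :: complex
  assumes Q: "x1 \<in> \<rat>" "x2 \<in> \<rat>" "x3 \<in> \<rat>" "y1 \<in> \<rat>" "y2 \<in> \<rat>" "y3 \<in> \<rat>"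
    and r1: "x1^2 - y1^2 * A^2 = -1" and r2: "x2^2 - y2^2 * B^2 = -1" and r3: "x3^2 - y3^2 * (A * B)^2 = -1"
  shows "A \<in> gen_field {(x1 + y1 * A) * (x2 + y2 * B) * (x3 + y3 * (A * B))}
       \<and> B \<in> gen_field {(x1 + y1 * A) * (x2 + y2 * B) * (x3 + y3 * (A * B))}"
proof -
  have z1: "x1 \<noteq> 0 \<and> y1 \<noteq> 0" by (rule nz_xy[OF Q(1,4) nA r1])
  have z2: "x2 \<noteq> 0 \<and> y2 \<noteq> 0" by (rule nz_xy[OF Q(2,5) nB r2])
  have z3: "x3 \<noteq> 0 \<and> y3 \<noteq> 0" by (rule nz_xy[OF Q(3,6) nC r3])
  have r3': "x3^2 = A^2 * B^2 * y3^2 - 1" using r3 by (simp add: power_mult_distrib algebra_simps)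
  have r1': "x1^2 = A^2 * y1^2 - 1" using r1 by (simp add: algebra_simps)
  have r2': "x2^2 = B^2 * y2^2 - 1" using r2 by (simp add: algebra_simps)
  define c0 where "c0 = x1 * x2 * x3 + A^2 * B^2 * (y1 * y2 * y3)"
  define c1 where "c1 = y1 * x2 * x3 + B^2 * (x1 * y2 * y3)"
  define c2 where "c2 = x1 * y2 * x3 + A^2 * (y1 * x2 * y3)"
  define c3 where "c3 = x1 * x2 * y3 + y1 * y2 * x3"
  have cQ: "c0 \<in> \<rat>" "c1 \<in> \<rat>" "c2 \<in> \<rat>" "c3 \<in> \<rat>"
    unfolding c0_def c1_def c2_def c3_def using Q hA hB by auto
  have eta: "(x1 + y1 * A) * (x2 + y2 * B) * (x3 + y3 * (A * B)) = c0 + (c1 * A + c2 * B + c3 * (A * B))"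
    unfolding c0_def c1_def c2_def c3_def by (simp add: algebra_simps power2_eq_square)
  have n23: "\<not> (c2 = 0 \<and> c3 = 0)"
  proof
    assume h: "c2 = 0 \<and> c3 = 0"
    have "x1 * (y2^2 * x3^2 - A^2 * x2^2 * y3^2) = y2 * x3 * c2 - A^2 * x2 * y3 * c3"
      unfolding c2_def c3_def by (simp add: algebra_simps power2_eq_square)
    then have "y2^2 * x3^2 - A^2 * x2^2 * y3^2 = 0" using h z1 by simp
    then have "(A * y3)^2 = y2^2" unfolding r3' r2' by (simp add: algebra_simps power_mult_distrib)
    then show False using sq_eq_rat[of A y3 y2] Q z3 nA by simp
  qed
  have n13: "\<not> (c1 = 0 \<and> c3 = 0)"
  proof
    assume h: "c1 = 0 \<and> c3 = 0"
    have "x2 * (y1^2 * x3^2 - B^2 * x1^2 * y3^2) = y1 * x3 * c1 - B^2 * x1 * y3 * c3"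
      unfolding c1_def c3_def by (simp add: algebra_simps power2_eq_square)
    then have "y1^2 * x3^2 - B^2 * x1^2 * y3^2 = 0" using h z2 by simp
    then have "(B * y3)^2 = y1^2" unfolding r3' r1' by (simp add: algebra_simps power_mult_distrib)
    then show False using sq_eq_rat[of B y3 y1] Q z3 nB by simp
  qed
  have n12: "\<not> (c1 = 0 \<and> c2 = 0)"
  proof
    assume h: "c1 = 0 \<and> c2 = 0"
    have "x3 * (A^2 * y1^2 * x2^2 - B^2 * x1^2 * y2^2) = A^2 * y1 * x2 * c1 - B^2 * x1 * y2 * c2"
      unfolding c1_def c2_def by (simp add: algebra_simps power2_eq_square)
    then have "A^2 * y1^2 * x2^2 - B^2 * x1^2 * y2^2 = 0" using h z3 by simp
    then have "(B * y2)^2 = (A * y1)^2" unfolding r1' r2' by (simp add: algebra_simps power_mult_distrib)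
    then have "B * y2 = A * y1 \<or> B * y2 = - (A * y1)" by (simp add: power2_eq_iff)
    then have "(A * B) * y2 = A^2 * y1 \<or> (A * B) * y2 = - (A^2 * y1)"
      by (auto simp: power2_eq_square algebra_simps)
    then have "A * B = A^2 * y1 / y2 \<or> A * B = - (A^2 * y1) / y2" using z2 by (auto simp: field_simps)
    then show False using nC hA Q by auto
  qed
  let ?F = "gen_field {(x1 + y1 * A) * (x2 + y2 * B) * (x3 + y3 * (A * B))}"
  have F: "subfield ?F" by (rule gen_field_subfield)
  have "c0 + (c1 * A + c2 * B + c3 * (A * B)) \<in> ?F" unfolding eta[symmetric] using gen_field_sub by blast
  moreover have "c0 \<in> ?F" using sf_Rats[OF F] cQ by blast
  ultimately have "(c0 + (c1 * A + c2 * B + c3 * (A * B))) - c0 \<in> ?F"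
    by (rule sf_diff[OF F])
  then have "c1 * A + c2 * B + c3 * (A * B) \<in> ?F" by simp
  then show ?thesis using gen_lemma[OF hA hB nA nB nC F cQ(2,3,4)] n12 n13 n23 by blast
qed

end

lemma cor_of_rat: "complex_of_real (of_rat q) = of_rat q"
  by (cases q) (simp add: of_rat_rat)

lemma nontriv_gal:
  assumes F0: "subfield F0" and s2: "s^2 \<in> F0" and sn: "s \<notin> F0" and G: "G = QL F0 s"
  shows "\<exists>\<sigma>\<in>gal G. \<exists>x\<in>G. \<sigma> x \<noteq> x"
proof -
  let ?\<phi> = "qconj F0 s"
  have em: "field_emb G ?\<phi>" unfolding G by (rule qconj_emb[OF F0 s2 sn])
  have im: "?\<phi> ` G = G" unfolding G by (rule qconj_image[OF F0 s2 sn])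
  have g1: "restrict ?\<phi> G \<in> embs G" unfolding embs_def using em by blast
  have g2: "restrict ?\<phi> G ` G = G" using im by (metis image_restrict_eq)
  have g: "restrict ?\<phi> G \<in> gal G" unfolding gal_def using g1 g2 by blast
  have sG: "s \<in> G" unfolding G using quad_gen[OF F0 s2 sn] gen_field_sub by blast
  have s0: "s \<noteq> 0" using sn sf_0[OF F0] by auto
  have rs: "restrict ?\<phi> G s = - s" using sG qconj_s[OF F0 s2 sn] by (simp only: restrict_apply')
  have ne: "restrict ?\<phi> G s \<noteq> s"
  proof
    assume h: "restrict ?\<phi> G s = s"
    have "- s = s" by (rule trans[OF rs[symmetric] h])
    have "2 * s = s - (- s)" by simp
    then have "2 * s = s - s" unfolding \<open>- s = s\<close> .
    then have "2 * s = 0" by (simp only: diff_self)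
    then show False using s0 by simp
  qed
  have "\<exists>x\<in>G. restrict ?\<phi> G x \<noteq> x" using ne sG by blast
  then show ?thesis using g by blast
qed

lemma unit_coords:
  assumes s2: "D^2 \<in> \<rat>" and sn: "D \<notin> \<rat>" and E: "E \<in> gen_field {D}" and N: "field_norm (gen_field {D}) E = -1"
  shows "\<exists>x\<in>\<rat>. \<exists>y\<in>\<rat>. E = x + y * D \<and> x^2 - y^2 * D^2 = -1"
proof -
  from E obtain x y where xy: "x \<in> \<rat>" "y \<in> \<rat>" "E = x + y * D"
    unfolding gen_field_single_QL[OF s2 sn] QL_def[OF subfield_Rats s2 sn] by blast
  then have "x^2 - y^2 * D^2 = -1" using N norm_quadQ[OF s2 sn xy(1,2)] by simp
  then show ?thesis using xy by blast
qed

lemma sqrt_notin_Rats: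
  fixes n :: int assumes "n \<ge> 0" "\<not> (\<exists>m::int. n = m ^ 2)"
  shows "complex_of_real (sqrt (real_of_int n)) \<notin> \<rat>"
  using sqrt_int_rat[OF assms(1)] assms(2) by auto


theorem mainTheorem4:
  fixes a b :: int and \<epsilon>1 \<epsilon>2 \<epsilon>3 :: real
  assumes "a > 0" and "b > 0"
    and "\<not> (\<exists>n::int. a = n ^ 2)" and "\<not> (\<exists>n::int. b = n ^ 2)" and "\<not> (\<exists>n::int. a * b = n ^ 2)"
  defines "K \<equiv> gen_field {complex_of_real (sqrt (real_of_int a)), complex_of_real (sqrt (real_of_int b))}"
    and "k1 \<equiv> gen_field {complex_of_real (sqrt (real_of_int a))}"
    and "k2 \<equiv> gen_field {complex_of_real (sqrt (real_of_int b))}"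
    and "k3 \<equiv> gen_field {complex_of_real (sqrt (real_of_int (a * b)))}"
  assumes "fundamental_unit k1 \<epsilon>1" and "fundamental_unit k2 \<epsilon>2" and "fundamental_unit k3 \<epsilon>3"
    and "field_norm k1 (complex_of_real \<epsilon>1) = -1"
    and "field_norm k2 (complex_of_real \<epsilon>2) = -1"
    and "field_norm k3 (complex_of_real \<epsilon>3) = -1"
  defines "\<eta> \<equiv> \<epsilon>1 * \<epsilon>2 * \<epsilon>3"
  shows "gen_field {complex_of_real \<eta>} = K \<and>
    galois (gen_field {complex_of_real (sqrt \<eta>)}) \<and>
    gal_exponent_two (gen_field {complex_of_real (sqrt \<eta>)}) \<and>
    (\<exists>r::rat. r \<noteq> 0 \<and>
           gen_field (insert (complex_of_real (sqrt \<eta>)) K) = gen_field (insert (csqrt (of_rat r)) K) \<and>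
           (let \<rho> = csqrt (of_rat r * complex_of_real \<eta>)
            in \<rho> \<in> K \<and> complex_of_real \<eta> = \<rho> ^ 2 / of_rat r))"
proof -
  define A where "A = complex_of_real (sqrt (real_of_int a))"
  define B where "B = complex_of_real (sqrt (real_of_int b))"
  have "A^2 = complex_of_real ((sqrt (real_of_int a))^2)" unfolding A_def by simp
  also have "\<dots> = of_int a" using assms(1) by simp
  finally have A2: "A^2 = of_int a" .
  have "B^2 = complex_of_real ((sqrt (real_of_int b))^2)" unfolding B_def by simp
  also have "\<dots> = of_int b" using assms(2) by simp
  finally have B2: "B^2 = of_int b" .
  have AB: "complex_of_real (sqrt (real_of_int (a * b))) = A * B"
    unfolding A_def B_def by (simp add: real_sqrt_mult)
  have hA: "A^2 \<in> \<rat>" and hB: "B^2 \<in> \<rat>" using A2 B2 by auto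
  have hC: "(A * B)^2 \<in> \<rat>" using hA hB by (simp add: power_mult_distrib)
  have nA: "A \<notin> \<rat>" unfolding A_def using sqrt_notin_Rats assms(1,3) by simp
  have nB: "B \<notin> \<rat>" unfolding B_def using sqrt_notin_Rats assms(2,4) by simp
  have "complex_of_real (sqrt (real_of_int (a * b))) \<notin> \<rat>"
    by (rule sqrt_notin_Rats) (use assms(1,2,5) in auto)
  then have nC: "A * B \<notin> \<rat>" unfolding AB .
  have K: "K = gen_field {A, B}" unfolding K_def A_def B_def ..
  have k1: "k1 = gen_field {A}" unfolding k1_def A_def ..
  have k2: "k2 = gen_field {B}" unfolding k2_def B_def ..
  have k3: "k3 = gen_field {A * B}" unfolding k3_def AB ..
  have Ksf: "subfield K" unfolding K by (rule gen_field_subfield)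
  have AK: "A \<in> K" and BK: "B \<in> K" unfolding K using gen_field_sub by blast+
  have k1K: "k1 \<subseteq> K" unfolding k1 K by (rule gen_field_mono) auto
  have k2K: "k2 \<subseteq> K" unfolding k2 K by (rule gen_field_mono) auto
  have k3K: "k3 \<subseteq> K" unfolding k3 using AK BK Ksf by (intro gen_field_min) (auto intro: sf_mult)
  define E1 where "E1 = complex_of_real \<epsilon>1"
  define E2 where "E2 = complex_of_real \<epsilon>2"
  define E3 where "E3 = complex_of_real \<epsilon>3"
  have e1: "\<epsilon>1 > 1" "E1 \<in> k1" using assms(10) unfolding fundamental_unit_def real_unit_of_def E1_def by auto
  have e2: "\<epsilon>2 > 1" "E2 \<in> k2" using assms(11) unfolding fundamental_unit_def real_unit_of_def E2_def by auto
  have e3: "\<epsilon>3 > 1" "E3 \<in> k3" using assms(12) unfolding fundamental_unit_def real_unit_of_def E3_def by auto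
  obtain x1 y1 where u1: "x1 \<in> \<rat>" "y1 \<in> \<rat>" "E1 = x1 + y1 * A" "x1^2 - y1^2 * A^2 = -1"
    using unit_coords[OF hA nA, of E1] e1(2) assms(13) unfolding k1 E1_def by blast
  obtain x2 y2 where u2: "x2 \<in> \<rat>" "y2 \<in> \<rat>" "E2 = x2 + y2 * B" "x2^2 - y2^2 * B^2 = -1"
    using unit_coords[OF hB nB, of E2] e2(2) assms(14) unfolding k2 E2_def by blast
  obtain x3 y3 where u3: "x3 \<in> \<rat>" "y3 \<in> \<rat>" "E3 = x3 + y3 * (A * B)" "x3^2 - y3^2 * (A * B)^2 = -1"
    using unit_coords[OF hC nC, of E3] e3(2) assms(15) unfolding k3 E3_def by blast
  have etac: "complex_of_real \<eta> = E1 * E2 * E3" unfolding \<eta>_def E1_def E2_def E3_def by simp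
  have etapos: "\<eta> > 0" unfolding \<eta>_def using e1 e2 e3 by simp
  have EK: "E1 \<in> K" "E2 \<in> K" "E3 \<in> K" using e1 e2 e3 k1K k2K k3K by auto
  have etaK: "complex_of_real \<eta> \<in> K" unfolding etac using EK Ksf by (simp add: sf_mult)
  have P1: "gen_field {complex_of_real \<eta>} = K"
  proof
    show "gen_field {complex_of_real \<eta>} \<subseteq> K" using etaK Ksf by (intro gen_field_min) auto
    have "A \<in> gen_field {complex_of_real \<eta>} \<and> B \<in> gen_field {complex_of_real \<eta>}"
      unfolding etac u1(3) u2(3) u3(3)
      by (rule eta_gen[OF hA hB nA nB nC u1(1) u2(1) u3(1) u1(2) u2(2) u3(2) u1(4) u2(4) u3(4)])
    then show "K \<subseteq> gen_field {complex_of_real \<eta>}" unfolding K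
      by (intro gen_field_min gen_field_subfield) auto
  qed
  define \<rho>f where "\<rho>f = (\<lambda>s1 s2 s3::real. \<epsilon>1 * \<epsilon>2 * \<epsilon>3 + s1 * \<epsilon>1 + s2 * \<epsilon>2 + s3 * \<epsilon>3)"
  have "\<exists>s1 s2 s3::real. s1^2 = 1 \<and> s2^2 = 1 \<and> s3^2 = 1 \<and> s1 * s2 * s3 = -1 \<and> \<rho>f s1 s2 s3 \<noteq> 0"
  proof (rule ccontr)
    assume "\<not> ?thesis"
    then have "\<rho>f 1 1 (-1) = 0" "\<rho>f 1 (-1) 1 = 0" "\<rho>f (-1) 1 1 = 0" "\<rho>f (-1) (-1) (-1) = 0" by auto
    then have "4 * \<eta> = 0" unfolding \<rho>f_def \<eta>_def by linarith
    then show False using etapos by simp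
  qed
  then obtain s1 s2 s3 :: real where s: "s1^2 = 1" "s2^2 = 1" "s3^2 = 1" "s1 * s2 * s3 = -1"
    and \<rho>0: "\<rho>f s1 s2 s3 \<noteq> 0" by blast
  define \<rho>R where "\<rho>R = \<rho>f s1 s2 s3"
  define Rc where "Rc = 4 * (x1 * x2 * x3 + y1 * y2 * y3 * A^2 * B^2 + of_real s1 * x1 + of_real s2 * x2 + of_real s3 * x3)"
  have sQ: "complex_of_real s1 \<in> \<rat>" "complex_of_real s2 \<in> \<rat>" "complex_of_real s3 \<in> \<rat>"
    using s(1,2,3) by (auto simp: power2_eq_1_iff)
  have RcQ: "Rc \<in> \<rat>" unfolding Rc_def using u1 u2 u3 hA hB sQ by auto
  have \<rho>c: "complex_of_real \<rho>R = complex_of_real \<eta> + of_real s1 * E1 + of_real s2 * E2 + of_real s3 * E3"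
    unfolding \<rho>R_def \<rho>f_def \<eta>_def E1_def E2_def E3_def by simp
  have sc: "(complex_of_real s1)^2 = 1" "(complex_of_real s2)^2 = 1" "(complex_of_real s3)^2 = 1"
    "complex_of_real s1 * complex_of_real s2 * complex_of_real s3 = -1"
    using s by (metis of_real_1 of_real_power of_real_mult of_real_minus)+
  have r3': "x3^2 - y3^2 * (A^2 * B^2) = -1" using u3(4) by (simp add: power_mult_distrib)
  have id: "(complex_of_real \<rho>R)^2 = Rc * complex_of_real \<eta>"
    unfolding \<rho>c etac u1(3) u2(3) u3(3) Rc_def
    using rho_identity[OF refl refl u1(4) u2(4) r3' sc] by simp
  obtain q :: rat where q: "Rc = of_rat q" using RcQ by (auto elim: Rats_cases)
  have qR: "real_of_rat q = \<rho>R^2 / \<eta>"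
  proof -
    have "complex_of_real (\<rho>R^2) = complex_of_real (real_of_rat q * \<eta>)"
      using id q cor_of_rat[of q] by simp
    then have "\<rho>R^2 = real_of_rat q * \<eta>" by (simp only: of_real_eq_iff)
    then show ?thesis using etapos by (simp add: field_simps)
  qed
  have \<rho>R0: "\<rho>R \<noteq> 0" using \<rho>0 \<rho>R_def by simp
  have qpos: "real_of_rat q > 0" unfolding qR using \<rho>R0 etapos by simp
  have q0: "q \<noteq> 0" using qpos by auto
  have \<rho>K: "complex_of_real \<rho>R \<in> K" unfolding \<rho>c using etaK EK sQ Ksf sf_Rats[OF Ksf]
    by (simp add: sf_add sf_mult)
  define P where "P = complex_of_real \<bar>\<rho>R\<bar>"
  have PK: "P \<in> K" unfolding P_def using \<rho>K sf_uminus[OF Ksf] by (cases "\<rho>R \<ge> 0") auto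
  have cs: "csqrt (of_rat q * complex_of_real \<eta>) = P"
  proof -
    have "of_rat q * complex_of_real \<eta> = complex_of_real (\<rho>R^2)" using id q by simp
    then show ?thesis unfolding P_def by (simp add: csqrt_of_real)
  qed
  define W where "W = complex_of_real (sqrt \<eta>)"
  define T where "T = csqrt (of_rat q)"
  have T: "T = complex_of_real (sqrt (real_of_rat q))"
    unfolding T_def using csqrt_of_real[of "real_of_rat q"] qpos cor_of_rat[of q] by simp
  have W0: "W \<noteq> 0" unfolding W_def using etapos by simp
  have T0: "T \<noteq> 0" unfolding T using qpos by simp
  have WT: "W * T = P"
  proof -
    have "sqrt \<eta> * sqrt (real_of_rat q) = sqrt (\<rho>R^2)"
      unfolding qR real_sqrt_mult[symmetric] using etapos by simp
    then show ?thesis unfolding W_def T P_def by (metis of_real_mult real_sqrt_abs)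
  qed
  have TQ: "T^2 \<in> \<rat>" unfolding T_def by simp
  have W2: "W^2 = complex_of_real \<eta>" unfolding W_def using etapos by (simp flip: of_real_power)
  have P2: "gen_field (insert W K) = gen_field (insert T K)"
  proof
    have "T = P / W" using W0 by (simp add: WT[symmetric])
    moreover have "P \<in> gen_field (insert W K)" "W \<in> gen_field (insert W K)"
      using PK gen_field_sub[of "insert W K"] by blast+
    ultimately have "T \<in> gen_field (insert W K)" using sf_divide[OF gen_field_subfield, of P "insert W K" W] by simp
    then show "gen_field (insert T K) \<subseteq> gen_field (insert W K)"
      using gen_field_sub[of "insert W K"] by (intro gen_field_min gen_field_subfield) auto
    have "W = P / T" using T0 by (simp add: WT[symmetric])
    moreover have "P \<in> gen_field (insert T K)" "T \<in> gen_field (insert T K)"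
      using PK gen_field_sub[of "insert T K"] by blast+
    ultimately have "W \<in> gen_field (insert T K)" using sf_divide[OF gen_field_subfield, of P "insert T K" T] by simp
    then show "gen_field (insert W K) \<subseteq> gen_field (insert T K)"
      using gen_field_sub[of "insert T K"] by (intro gen_field_min gen_field_subfield) auto
  qed
  define G where "G = gen_field {W}"
  have Gsf: "subfield G" unfolding G_def by (rule gen_field_subfield)
  have WG: "W \<in> G" unfolding G_def using gen_field_sub by blast
  have KG: "K \<subseteq> G"
  proof -
    have "complex_of_real \<eta> \<in> G" unfolding W2[symmetric] using WG Gsf by (simp add: sf_power)
    then have "gen_field {complex_of_real \<eta>} \<subseteq> G" using Gsf by (intro gen_field_min) auto
    then show ?thesis using P1 by simp
  qed
  have GS: "G = gen_field {A, B, T}"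
  proof (rule subset_antisym)
    have g1: "gen_field {A, B} \<subseteq> gen_field {A, B, T}"
      by (rule gen_field_mono, rule insert_mono, rule insert_mono, rule empty_subsetI)
    have PS: "P \<in> gen_field {A, B, T}" by (rule subsetD[OF g1 PK[unfolded K]])
    have TS: "T \<in> gen_field {A, B, T}" by (rule subsetD[OF gen_field_sub]) simp
    have "P / T \<in> gen_field {A, B, T}" by (rule sf_divide[OF gen_field_subfield PS TS])
    moreover have "W = P / T" using T0 by (simp add: WT[symmetric])
    ultimately have WS: "W \<in> gen_field {A, B, T}" by simp
    show "G \<subseteq> gen_field {A, B, T}" unfolding G_def
      by (rule gen_field_min[OF gen_field_subfield]) (simp add: WS)
    have TPW: "T = P / W" using W0 by (simp add: WT[symmetric])
    have "P / W \<in> G" by (rule sf_divide[OF Gsf subsetD[OF KG PK] WG])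
    then have TG: "T \<in> G" unfolding TPW .
    have AG: "A \<in> G" by (rule subsetD[OF KG AK])
    have BG: "B \<in> G" by (rule subsetD[OF KG BK])
    show "gen_field {A, B, T} \<subseteq> G"
      by (rule gen_field_min[OF Gsf]) (simp add: AG BG TG)
  qed
  have finS: "finite {A, B, T}" by simp
  have sqS: "s^2 \<in> \<rat>" if "s \<in> {A, B, T}" for s
  proof -
    have "s = A \<or> s = B \<or> s = T" using that by simp
    then show ?thesis using hA hB TQ by (elim disjE) simp_all
  qed
  have gal: "galois G \<and> (\<forall>\<sigma>\<in>gal G. \<forall>x\<in>G. \<sigma> (\<sigma> x) = x)"
    unfolding GS by (rule galois_sq[OF finS sqS])
  have nt: "\<exists>\<sigma>\<in>gal G. \<exists>x\<in>G. \<sigma> x \<noteq> x"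
  proof (cases "T \<in> K")
    case True
    have AK': "A \<in> K" by (rule AK)
    have "gen_field {A, B, T} \<subseteq> K"
      by (rule gen_field_min[OF Ksf]) (simp add: AK BK True)
    then have "G \<subseteq> K" unfolding GS .
    then have GK: "G = K" using KG by (rule subset_antisym)
    have k1sf: "subfield k1" unfolding k1 by (rule gen_field_subfield)
    have Bk1: "B^2 \<in> k1" by (rule sf_Rats[OF k1sf hB])
    have nBk1: "B \<notin> k1" unfolding k1 gen_field_single_QL[OF hA nA] by (rule B_notin_k1[OF hA hB nA nB nC])
    have "gen_field (insert B k1) = gen_field {B, A}" unfolding k1 gen_field_insert_gen ..
    also have "\<dots> = K" unfolding K by (simp only: insert_commute)
    finally have "K = gen_field (insert B k1)" by (rule sym)
    also have "\<dots> = QL k1 B" by (rule quad_gen[OF k1sf Bk1 nBk1])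
    finally have "G = QL k1 B" unfolding GK .
    then show ?thesis by (rule nontriv_gal[OF k1sf Bk1 nBk1])
  next
    case False
    have TK: "T^2 \<in> K" by (rule sf_Rats[OF Ksf TQ])
    have "gen_field (insert T K) = gen_field {T, A, B}" unfolding K gen_field_insert_gen ..
    also have "\<dots> = gen_field {A, B, T}" by (simp only: insert_commute)
    finally have "G = gen_field (insert T K)" unfolding GS by (rule sym)
    also have "\<dots> = QL K T" by (rule quad_gen[OF Ksf TK False])
    finally show ?thesis by (rule nontriv_gal[OF Ksf TK False])
  qed
  have P3: "gal_exponent_two G" unfolding gal_exponent_two_def using gal nt by blast
  have P4: "\<exists>r::rat. r \<noteq> 0 \<and>
           gen_field (insert (complex_of_real (sqrt \<eta>)) K) = gen_field (insert (csqrt (of_rat r)) K) \<and>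
           (let \<rho> = csqrt (of_rat r * complex_of_real \<eta>)
            in \<rho> \<in> K \<and> complex_of_real \<eta> = \<rho> ^ 2 / of_rat r)"
  proof (intro exI[of _ q] conjI)
    show "q \<noteq> 0" by (rule q0)
    show "gen_field (insert (complex_of_real (sqrt \<eta>)) K) = gen_field (insert (csqrt (of_rat q)) K)"
      using P2 unfolding W_def T_def .
    have "(csqrt (of_rat q * complex_of_real \<eta>))^2 / of_rat q = complex_of_real \<eta>"
      using q0 by simp
    then show "let \<rho> = csqrt (of_rat q * complex_of_real \<eta>) in \<rho> \<in> K \<and> complex_of_real \<eta> = \<rho> ^ 2 / of_rat q"
      unfolding Let_def using cs PK by simp
  qed
  show ?thesis using P1 gal P3 P4 unfolding G_def W_def by blast
qed


end
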